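(* For every $n\ge 3$, the sun $S_n$ is distance antimagic.
   Context: The sun $S_n$ ($n\ge3$) is the graph on $2n$ vertices obtained from a cycle $x_1x_2\cdots x_n x_1$ by attaching a new pendant vertex $y_i$ adjacent only to $x_i$, for each $i=1,\dots,n$. For a graph $G=(V,E)$ with $v=|V|$ and a bijection $f:V\to\{1,\dots,v\}$, the vertex-weight of $x$ is $w(x)=\sum_{y\in N(x)}f(y)$ with $N(x)$ the set of neighbours of $x$. $G$ is distance antimagic if it admits a bijection $f$ under which all vertex-weights are pairwise distinct. *)

theory Defs
  imports Main
begin

text \<open>A simple graph is given by a finite vertex set V and a symmetric
irreflexive adjacency relation adj. Neighbourhood of x within V.\<close>

definition nbhd :: "'a set \<Rightarrow> ('a \<Rightarrow> 'a \<Rightarrow> bool) \<Rightarrow> 'a \<Rightarrow> 'a set" where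
  "nbhd V adj x = {y \<in> V. adj x y}"

definition vweight :: "'a set \<Rightarrow> ('a \<Rightarrow> 'a \<Rightarrow> bool) \<Rightarrow> ('a \<Rightarrow> nat) \<Rightarrow> 'a \<Rightarrow> nat" where
  "vweight V adj f x = (\<Sum>y\<in>nbhd V adj x. f y)"

definition distance_antimagic :: "'a set \<Rightarrow> ('a \<Rightarrow> 'a \<Rightarrow> bool) \<Rightarrow> bool" where
  "distance_antimagic V adj \<longleftrightarrow>
     (\<exists>f. bij_betw f V {1..card V} \<and> inj_on (vweight V adj f) V)"

text \<open>The sun S_n on vertex set {0..<2n}: cycle vertices x_i = i (i < n),
with x_i adjacent to x_{(i+1) mod n}; pendant vertices y_i = n + i adjacent to x_i only.\<close>

definition sun_vertices :: "nat \<Rightarrow> nat set" where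
  "sun_vertices n = {0..<2*n}"

definition sun_adj :: "nat \<Rightarrow> nat \<Rightarrow> nat \<Rightarrow> bool" where
  "sun_adj n u v \<longleftrightarrow>
     (u < n \<and> v < n \<and> (v = (u + 1) mod n \<or> u = (v + 1) mod n)) \<or>
     (u < n \<and> v = n + u) \<or> (v < n \<and> u = n + v)"

end

theory Submission
  imports Defs
begin

lemma modsuc: "(y::nat) < n \<Longrightarrow> Suc y mod n = (if Suc y=n then 0 else Suc y)"
  by auto

lemma dvdsuc: "(x::nat) < n \<Longrightarrow> n dvd Suc x \<Longrightarrow> Suc x = n"
  using dvd_imp_le nat_dvd_not_less by (metis Suc_leI le_neq_implies_less zero_less_Suc)

definition lab :: "nat \<Rightarrow> nat \<Rightarrow> nat" where
  "lab n v = (if v < n then v+1 else 3*n - v)"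

definition wt :: "nat \<Rightarrow> nat \<Rightarrow> nat" where
  "wt n v = (if v < n then (if v = 0 then 3*n+2 else if v = n-1 then 2*n+1 else v+2*n+2)
             else v - n + 1)"

lemma nb0: "n \<ge> 3 \<Longrightarrow> nbhd (sun_vertices n) (sun_adj n) 0 = {1, n-1, n}"
  unfolding nbhd_def sun_vertices_def sun_adj_def
  by (auto simp: modsuc dest: dvdsuc split: if_splits)

lemma nblast: "n \<ge> 3 \<Longrightarrow> nbhd (sun_vertices n) (sun_adj n) (n - Suc 0) = {0, n-2, 2*n-1}"
  unfolding nbhd_def sun_vertices_def sun_adj_def
  by (auto simp: modsuc split: if_splits)

lemma nbmid: "n \<ge> 3 \<Longrightarrow> 0 < v \<Longrightarrow> v < n - 1 \<Longrightarrow>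
   nbhd (sun_vertices n) (sun_adj n) v = {v+1, v-1, n+v}"
  unfolding nbhd_def sun_vertices_def sun_adj_def
  by (auto simp: modsuc split: if_splits)

lemma nbpend: "n \<ge> 3 \<Longrightarrow> n \<le> v \<Longrightarrow> v < 2*n \<Longrightarrow>
   nbhd (sun_vertices n) (sun_adj n) v = {v-n}"
  unfolding nbhd_def sun_vertices_def sun_adj_def
  by (auto simp: modsuc split: if_splits)

lemma vw: assumes "n \<ge> 3" "v < 2*n"
  shows "vweight (sun_vertices n) (sun_adj n) (lab n) v = wt n v"
proof -
  consider "v = 0" | "v = n-1" | "0 < v \<and> v < n-1" | "n \<le> v" using assms by linarith
  then show ?thesis
  proof cases
    case 1 then show ?thesis using assms unfolding vweight_def
      by (simp add: nb0 lab_def wt_def)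
  next
    case 2
    have "nbhd (sun_vertices n) (sun_adj n) v = {0, n-2, 2*n-1}" using nblast assms 2 by simp
    then show ?thesis using assms 2 unfolding vweight_def
      by (simp add: lab_def wt_def)
  next
    case 3 then show ?thesis using assms unfolding vweight_def
      by (simp add: nbmid lab_def wt_def; linarith)
  next
    case 4 then show ?thesis using assms unfolding vweight_def
      by (simp add: nbpend lab_def wt_def)
  qed
qed

theorem mainTheorem8:
  fixes n :: nat
  assumes "n \<ge> 3"
  shows "distance_antimagic (sun_vertices n) (sun_adj n)"
proof -
  have card: "card (sun_vertices n) = 2*n" by (simp add: sun_vertices_def)
  have bij: "bij_betw (lab n) (sun_vertices n) {1..2*n}"
  proof (rule bij_betw_imageI)
    show "inj_on (lab n) (sun_vertices n)"
      unfolding inj_on_def lab_def sun_vertices_def by auto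
    show "lab n ` sun_vertices n = {1..2*n}"
    proof
      show "lab n ` sun_vertices n \<subseteq> {1..2*n}"
        unfolding lab_def sun_vertices_def by auto
      show "{1..2*n} \<subseteq> lab n ` sun_vertices n"
      proof
        fix k assume k: "k \<in> {1..2*n}"
        show "k \<in> lab n ` sun_vertices n"
        proof (cases "k \<le> n")
          case True
          then show ?thesis using k unfolding lab_def sun_vertices_def
            by (intro image_eqI[where x="k-1"]) auto
        next
          case False
          then show ?thesis using k unfolding lab_def sun_vertices_def
            by (intro image_eqI[where x="3*n-k"]) auto
        qed
      qed
    qed
  qed
  have inj: "inj_on (vweight (sun_vertices n) (sun_adj n) (lab n)) (sun_vertices n)"
  proof -
    have "inj_on (wt n) (sun_vertices n)"
      unfolding inj_on_def wt_def sun_vertices_def using assms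
      by (auto split: if_splits)
    moreover have "\<forall>v\<in>sun_vertices n. vweight (sun_vertices n) (sun_adj n) (lab n) v = wt n v"
      using vw assms by (simp add: sun_vertices_def)
    ultimately show ?thesis using inj_on_cong by metis
  qed
  show ?thesis unfolding distance_antimagic_def card using bij inj by blast
qed

end
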